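(* Let $\mathcal{A}(X)$ be the free transposed Poisson $3$-Lie algebra over $\mathbb{C}$ generated by a countable set $X=\{a_1,a_2,\ldots\}$. Then $\mathcal{A}(X)$ does not satisfy the identity $$S(h,y_1,y_2,x_1,x_2):=y_1[hy_2,x_1,x_2]-y_2[hy_1,x_1,x_2]+hx_1[y_1,y_2,x_2]-hx_2[y_1,y_2,x_1]=0;$$ that is, there exist $h,y_1,y_2,x_1,x_2\in\mathcal{A}(X)$ with $S(h,y_1,y_2,x_1,x_2)\neq 0$. In particular, $\mathcal{A}(X)$ is not a strong transposed Poisson $3$-Lie algebra.
   Context: A $3$-Lie algebra is a vector space with a trilinear skew-symmetric bracket satisfying $[[x_1,x_2,x_3],y_2,y_3]=\sum_{i=1}^3[x_1,\ldots,[x_i,y_2,y_3],\ldots,x_3]$. A transposed Poisson $3$-Lie algebra is a triple $(A,\cdot,[\cdot,\cdot,\cdot])$ with $(A,\cdot)$ commutative associative, $(A,[\cdot,\cdot,\cdot])$ a $3$-Lie algebra, and $3h[a_1,a_2,a_3]=[ha_1,a_2,a_3]+[a_1,ha_2,a_3]+[a_1,a_2,ha_3]$ for all $h,a_i\in A$. These algebras form a variety defined by multilinear identities; $\mathcal{A}(X)$ is the free object in this variety on $X$. A transposed Poisson $3$-Lie algebra is strong if it satisfies $S(h,y_1,y_2,x_1,x_2)=0$ identically. *)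

theory Defs
  imports Complex_Main
begin

text \<open>Terms of the signature of transposed Poisson 3-Lie algebras over the complex
numbers, with generators indexed by nat (the countable set X).\<close>

datatype tterm =
    Gen nat
  | TZero
  | TAdd tterm tterm
  | TSmul complex tterm
  | TMul tterm tterm
  | TBr tterm tterm tterm

definition TSub :: "tterm \<Rightarrow> tterm \<Rightarrow> tterm" where
  "TSub x y = TAdd x (TSmul (-1) y)"

text \<open>The free transposed Poisson 3-Lie algebra A(X) is the
quotient of tterm by this congruence; two terms denote the same element of A(X)
iff they are related by tp_eq.\<close>

inductive tp_eq :: "tterm \<Rightarrow> tterm \<Rightarrow> bool" where
  refl: "tp_eq x x"
| sym: "tp_eq x y \<Longrightarrow> tp_eq y x"
| trans: "tp_eq x y \<Longrightarrow> tp_eq y z \<Longrightarrow> tp_eq x z"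
| cong_add: "tp_eq x x' \<Longrightarrow> tp_eq y y' \<Longrightarrow> tp_eq (TAdd x y) (TAdd x' y')"
| cong_smul: "tp_eq x x' \<Longrightarrow> tp_eq (TSmul c x) (TSmul c x')"
| cong_mul: "tp_eq x x' \<Longrightarrow> tp_eq y y' \<Longrightarrow> tp_eq (TMul x y) (TMul x' y')"
| cong_br: "tp_eq x x' \<Longrightarrow> tp_eq y y' \<Longrightarrow> tp_eq z z' \<Longrightarrow>
             tp_eq (TBr x y z) (TBr x' y' z')"
| add_assoc: "tp_eq (TAdd (TAdd x y) z) (TAdd x (TAdd y z))"
| add_comm: "tp_eq (TAdd x y) (TAdd y x)"
| add_zero: "tp_eq (TAdd x TZero) x"
| add_neg: "tp_eq (TAdd x (TSmul (-1) x)) TZero"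
| smul_add: "tp_eq (TSmul c (TAdd x y)) (TAdd (TSmul c x) (TSmul c y))"
| add_smul: "tp_eq (TSmul (c + d) x) (TAdd (TSmul c x) (TSmul d x))"
| smul_smul: "tp_eq (TSmul c (TSmul d x)) (TSmul (c * d) x)"
| smul_one: "tp_eq (TSmul 1 x) x"
| mul_add: "tp_eq (TMul (TAdd x y) z) (TAdd (TMul x z) (TMul y z))"
| mul_smul: "tp_eq (TMul (TSmul c x) y) (TSmul c (TMul x y))"
| mul_comm: "tp_eq (TMul x y) (TMul y x)"
| mul_assoc: "tp_eq (TMul (TMul x y) z) (TMul x (TMul y z))"
| br_add1: "tp_eq (TBr (TAdd x x') y z) (TAdd (TBr x y z) (TBr x' y z))"
| br_add2: "tp_eq (TBr x (TAdd y y') z) (TAdd (TBr x y z) (TBr x y' z))"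
| br_add3: "tp_eq (TBr x y (TAdd z z')) (TAdd (TBr x y z) (TBr x y z'))"
| br_smul1: "tp_eq (TBr (TSmul c x) y z) (TSmul c (TBr x y z))"
| br_smul2: "tp_eq (TBr x (TSmul c y) z) (TSmul c (TBr x y z))"
| br_smul3: "tp_eq (TBr x y (TSmul c z)) (TSmul c (TBr x y z))"
| br_skew12: "tp_eq (TBr x y z) (TSmul (-1) (TBr y x z))"
| br_skew23: "tp_eq (TBr x y z) (TSmul (-1) (TBr x z y))"
| filippov: "tp_eq (TBr (TBr x1 x2 x3) y2 y3)
     (TAdd (TBr (TBr x1 y2 y3) x2 x3)
       (TAdd (TBr x1 (TBr x2 y2 y3) x3) (TBr x1 x2 (TBr x3 y2 y3))))"
| transposed: "tp_eq (TSmul 3 (TMul h (TBr a1 a2 a3)))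
     (TAdd (TBr (TMul h a1) a2 a3) (TAdd (TBr a1 (TMul h a2) a3) (TBr a1 a2 (TMul h a3))))"

definition S_term :: "tterm \<Rightarrow> tterm \<Rightarrow> tterm \<Rightarrow> tterm \<Rightarrow> tterm \<Rightarrow> tterm" where
  "S_term h y1 y2 x1 x2 =
     TAdd (TSub (TMul y1 (TBr (TMul h y2) x1 x2)) (TMul y2 (TBr (TMul h y1) x1 x2)))
          (TSub (TMul (TMul h x1) (TBr y1 y2 x2)) (TMul (TMul h x2) (TBr y1 y2 x1)))"

end

theory Submission
  imports Defs "HOL-Computational_Algebra.Polynomial"
begin

definition w :: "'r::comm_ring_1 \<Rightarrow> 'r \<Rightarrow> 'r \<Rightarrow> 'r \<Rightarrow> 'r \<Rightarrow> 'r \<Rightarrow> 'r \<Rightarrow> 'r \<Rightarrow> 'r \<Rightarrow> 'r" where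
 "w a a1 a2 b b1 b2 c c1 c2 = a*(b1*c2 - c1*b2) - b*(a1*c2 - c1*a2) + c*(a1*b2 - b1*a2)"

lemma alg: fixes p p1 p2 a a1 a2 b b1 b2 c c1 c2 :: "'r::comm_ring_1"
  shows "w (p*a) (p1*a+p*a1) (p2*a+p1*a1+p1*a1+p*a2) b b1 b2 c c1 c2
       + w a a1 a2 (p*b) (p1*b+p*b1) (p2*b+p1*b1+p1*b1+p*b2) c c1 c2
       + w a a1 a2 b b1 b2 (p*c) (p1*c+p*c1) (p2*c+p1*c1+p1*c1+p*c2)
     = 3 * (p * w a a1 a2 b b1 b2 c c1 c2)"
  unfolding w_def by (simp add: algebra_simps)

definition W :: "complex poly \<Rightarrow> complex poly \<Rightarrow> complex poly \<Rightarrow> complex poly" where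
  "W a b c = w a (pderiv a) (pderiv (pderiv a)) b (pderiv b) (pderiv (pderiv b))
                c (pderiv c) (pderiv (pderiv c))"

fun ev :: "tterm \<Rightarrow> complex poly \<times> complex poly" where
  "ev (Gen n) = (monom 1 n, 0)"
| "ev TZero = (0, 0)"
| "ev (TAdd x y) = (fst (ev x) + fst (ev y), snd (ev x) + snd (ev y))"
| "ev (TSmul c x) = (smult c (fst (ev x)), smult c (snd (ev x)))"
| "ev (TMul x y) = (fst (ev x) * fst (ev y), fst (ev x) * snd (ev y) + snd (ev x) * fst (ev y))"
| "ev (TBr x y z) = (0, W (fst (ev x)) (fst (ev y)) (fst (ev z)))"

lemma sm: "smult c p = [:c:] * p" by simp

lemma s3: "smult 3 (x::complex poly) = 3 * x"
proof -
  have "smult 3 x = [:3:] * x" by simp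
  also have "[:3:] = (3::complex poly)" by (rule numeral_poly[symmetric])
  finally show ?thesis .
qed

lemma pd1: "pderiv (p * q) = pderiv p * q + p * pderiv q"
  by (simp add: pderiv_mult algebra_simps)

lemma pd2: "pderiv (pderiv (p * q)) = pderiv (pderiv p) * q + pderiv p * pderiv q + pderiv p * pderiv q + p * pderiv (pderiv q)"
  by (simp add: pderiv_mult pderiv_add algebra_simps)

lemma pd2b: "pderiv (pderiv p * q + p * pderiv q) = pderiv (pderiv p) * q + pderiv p * pderiv q + pderiv p * pderiv q + p * pderiv (pderiv q)"
  by (simp add: pderiv_mult pderiv_add algebra_simps)

lemma Wtrans: "W (p*a) b c + W a (p*b) c + W a b (p*c) = 3 * (p * W a b c)"
  unfolding W_def pd1 pd2b by (rule alg)

lemma w_add1: "w (a+a') (a1+a1') (a2+a2') b b1 b2 c c1 c2 = w a a1 a2 b b1 b2 c c1 c2 + w a' a1' a2' b b1 b2 c c1 c2"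
  unfolding w_def by (simp add: algebra_simps)
lemma w_swap12: "w a a1 a2 b b1 b2 c c1 c2 = - w b b1 b2 a a1 a2 c c1 c2"
  unfolding w_def by (simp add: algebra_simps)
lemma w_swap23: "w a a1 a2 b b1 b2 c c1 c2 = - w a a1 a2 c c1 c2 b b1 b2"
  unfolding w_def by (simp add: algebra_simps)
lemma w_mul1: "w (k*a) (k*a1) (k*a2) b b1 b2 c c1 c2 = k * w a a1 a2 b b1 b2 c c1 c2"
  unfolding w_def by (simp add: algebra_simps)
lemma w_zero1: "w 0 0 0 b b1 b2 c c1 c2 = 0"
  unfolding w_def by simp

lemma W_add1: "W (a+a') b c = W a b c + W a' b c"
  unfolding W_def pderiv_add w_add1 ..
lemma W_swap12: "W a b c = - W b a c"
  unfolding W_def using w_swap12 .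
lemma W_swap23: "W a b c = - W a c b"
  unfolding W_def using w_swap23 .
lemma W_add2: "W a (b+b') c = W a b c + W a b' c"
proof -
  have "W a (b+b') c = - W (b+b') a c" by (rule W_swap12)
  also have "\<dots> = - W b a c - W b' a c" by (simp add: W_add1)
  also have "\<dots> = W a b c + W a b' c" using W_swap12[of a b c] W_swap12[of a b' c] by simp
  finally show ?thesis .
qed
lemma W_add3: "W a b (c+c') = W a b c + W a b c'"
proof -
  have "W a b (c+c') = - W (c+c') b a" using W_swap12[of a b "c+c'"] W_swap23[of b a "c+c'"] W_swap12[of "c+c'" b a] by simp
  also have "\<dots> = - W c b a - W c' b a" by (simp add: W_add1)
  also have "\<dots> = W a b c + W a b c'"
    using W_swap12[of a b c] W_swap23[of b a c] W_swap12[of c b a]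
          W_swap12[of a b c'] W_swap23[of b a c'] W_swap12[of c' b a] by simp
  finally show ?thesis .
qed
lemma W_smul1: "W (smult k a) b c = smult k (W a b c)"
  unfolding W_def pderiv_smult unfolding sm by (rule w_mul1)
lemma W_smul2: "W a (smult k b) c = smult k (W a b c)"
proof -
  have "W a (smult k b) c = - W (smult k b) a c" by (rule W_swap12)
  also have "\<dots> = - smult k (W b a c)" by (simp add: W_smul1)
  also have "\<dots> = smult k (W a b c)" using W_swap12[of a b c] by simp
  finally show ?thesis .
qed
lemma W_smul3: "W a b (smult k c) = smult k (W a b c)"
proof -
  have "W a b (smult k c) = - W a (smult k c) b" by (rule W_swap23)
  also have "\<dots> = - smult k (W a c b)" by (simp add: W_smul2)
  also have "\<dots> = smult k (W a b c)" using W_swap23[of a b c] by simp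
  finally show ?thesis .
qed
lemma W_zero1: "W 0 b c = 0"
  unfolding W_def by (simp add: w_zero1)

lemma ev_sound: "tp_eq x y \<Longrightarrow> ev x = ev y"
proof (induction rule: tp_eq.induct)
  case (add_neg x) then show ?case by (simp add: prod_eq_iff)
next
  case (br_add1 x x' y z) then show ?case by (simp add: W_add1)
next
  case (br_add2 x y y' z) then show ?case by (simp add: W_add2)
next
  case (br_add3 x y z z') then show ?case by (simp add: W_add3)
next
  case (br_smul1 c x y z) then show ?case by (simp add: W_smul1)
next
  case (br_smul2 c x y z) then show ?case by (simp add: W_smul2)
next
  case (br_smul3 c x y z) then show ?case by (simp add: W_smul3)
next
  case (br_skew12 x y z) then show ?case by (simp add: W_swap12[of "fst (ev x)" "fst (ev y)"])
next
  case (br_skew23 x y z) then show ?case by (simp add: W_swap23[of "fst (ev x)" "fst (ev y)"])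
next
  case (filippov x1 x2 x3 y2 y3) then show ?case
  proof -
    have z2: "W a 0 c = 0" for a c using W_swap12[of a 0 c] by (simp add: W_zero1)
    have z3: "W a b 0 = 0" for a b using W_swap23[of a b 0] by (simp add: z2)
    show ?case by (simp add: W_zero1 z2 z3)
  qed
next
  case (transposed h a1 a2 a3)
  show ?case using Wtrans[of "fst (ev h)" "fst (ev a1)" "fst (ev a2)" "fst (ev a3)"]
    by (simp add: s3 add.assoc)
qed (auto simp: algebra_simps smult_add_right smult_add_left)

theorem mainTheorem8:
  shows "\<exists>h y1 y2 x1 x2. \<not> tp_eq (S_term h y1 y2 x1 x2) TZero"
proof -
  define X :: "complex poly" where "X = monom 1 1"
  have W0: "W a b b = 0" for a b
    using W_swap23[of a b b] by (simp add: eq_neg_iff_add_eq_0 flip: mult_2)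
  have W0': "W a b a = 0" for a b
    using W_swap12[of a b a] W0[of b a] by simp
  have W1: "W (X*X) 1 X \<noteq> 0"
    unfolding X_def W_def w_def by (simp add: mult_monom pderiv_monom)
  have g1: "fst (ev (Gen (Suc 0))) = X" by (simp add: X_def)
  have g0: "fst (ev (Gen 0)) = 1" by simp
  have H: "snd (ev (S_term (Gen 1) (Gen 0) (Gen 1) (Gen 0) (Gen 1))) \<noteq> 0"
    using W1 by (simp add: S_term_def TSub_def g1 g0 W0 W0' del: ev.simps(1))
  have "\<not> tp_eq (S_term (Gen 1) (Gen 0) (Gen 1) (Gen 0) (Gen 1)) TZero"
  proof
    assume "tp_eq (S_term (Gen 1) (Gen 0) (Gen 1) (Gen 0) (Gen 1)) TZero"
    then have "ev (S_term (Gen 1) (Gen 0) (Gen 1) (Gen 0) (Gen 1)) = ev TZero" by (rule ev_sound)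
    then have "snd (ev (S_term (Gen 1) (Gen 0) (Gen 1) (Gen 0) (Gen 1))) = 0" by simp
    with H show False by simp
  qed
  then show ?thesis by blast
qed

end
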